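(* Let $0\le\beta<\alpha<\infty$ and $1<p<q<\infty$ with $\frac1p-\frac1q=\frac{\alpha-\beta}{\mathbf N}$. Suppose that to each cube $Q\subseteq\mathbb R^N$ a function $h^Q$ defined on $Q$ is associated, and for $\gamma\ge0$ set $$h_\gamma(x)=\sup_{Q\ni x}\frac{1}{\omega(Q)^{1+\gamma/\mathbf N}}\int_Q|h^Q(y)|\,d\omega(y),\qquad x\in\mathbb R^N,$$ the supremum over all cubes $Q$ containing $x$. Then $\|h_\beta\|_{L^q_\omega}\le C\|h_\alpha\|_{L^p_\omega}$, where $C$ depends only on $p,q,\alpha$ and $\omega$.
   Context: Let $R\subset\mathbb R^N\setminus\{0\}$ be a root system (finite, invariant under the reflections $\sigma_\alpha(x)=x-2\langle x,\alpha\rangle\alpha/\|\alpha\|^2$), normalized so that $\langle\alpha,\alpha\rangle=2$; $G$ the generated reflection group; $\kappa\ge0$ a $G$-invariant multiplicity function; $d\omega(x)=\prod_{\alpha\in R}|\langle\alpha,x\rangle|^{\kappa(\alpha)}dx$; $\mathbf N=N+\sum_{\alpha\in R}\kappa(\alpha)$; $L^p_\omega=L^p(\mathbb R^N,\omega)$. Cubes are Euclidean cubes in $\mathbb R^N$. *)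

theory Defs
  imports "HOL-Analysis.Analysis"
begin

definition refl_along :: "real^'n \<Rightarrow> real^'n \<Rightarrow> real^'n" where
  "refl_along a x = x - (2 * (x \<bullet> a) / (a \<bullet> a)) *\<^sub>R a"

definition root_system :: "(real^'n) set \<Rightarrow> bool" where
  "root_system R \<longleftrightarrow> finite R \<and> 0 \<notin> R \<and> (\<forall>a\<in>R. a \<bullet> a = 2)
      \<and> (\<forall>a\<in>R. \<forall>b\<in>R. refl_along a b \<in> R)"

inductive_set refl_group :: "(real^'n) set \<Rightarrow> (real^'n \<Rightarrow> real^'n) set" for R where
  id: "id \<in> refl_group R"
| step: "a \<in> R \<Longrightarrow> g \<in> refl_group R \<Longrightarrow> refl_along a \<circ> g \<in> refl_group R"

definition multiplicity :: "(real^'n) set \<Rightarrow> (real^'n \<Rightarrow> real) \<Rightarrow> bool" where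
  "multiplicity R \<kappa> \<longleftrightarrow> (\<forall>a\<in>R. \<kappa> a \<ge> 0) \<and> (\<forall>g\<in>refl_group R. \<forall>a\<in>R. \<kappa> (g a) = \<kappa> a)"

text \<open>|t|^k with the convention |t|^0 = 1 (Isabelle's powr has 0 powr 0 = 0).\<close>
definition abs_pow :: "real \<Rightarrow> real \<Rightarrow> real" where
  "abs_pow t k = (if k = 0 then 1 else \<bar>t\<bar> powr k)"

definition dunkl_weight :: "(real^'n) set \<Rightarrow> (real^'n \<Rightarrow> real) \<Rightarrow> real^'n \<Rightarrow> real" where
  "dunkl_weight R \<kappa> x = (\<Prod>a\<in>R. abs_pow (a \<bullet> x) (\<kappa> a))"

definition dunkl_measure :: "(real^'n) set \<Rightarrow> (real^'n \<Rightarrow> real) \<Rightarrow> (real^'n) measure" where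
  "dunkl_measure R \<kappa> = density lborel (\<lambda>x. ennreal (dunkl_weight R \<kappa> x))"

definition hom_dim :: "(real^'n) set \<Rightarrow> (real^'n \<Rightarrow> real) \<Rightarrow> real" where
  "hom_dim R \<kappa> = real CARD('n) + (\<Sum>a\<in>R. \<kappa> a)"

text \<open>Euclidean (axis-parallel) cubes; taken open, which does not affect the maximal function
  since boundaries are omega-null.\<close>
definition is_cube :: "(real^'n) set \<Rightarrow> bool" where
  "is_cube Q \<longleftrightarrow> (\<exists>c r. r > 0 \<and> Q = {x. \<forall>i. \<bar>x $ i - c $ i\<bar> < r})"

definition enn_powr :: "ennreal \<Rightarrow> real \<Rightarrow> ennreal" where
  "enn_powr x s = (if x = \<infinity> then \<infinity> else ennreal (enn2real x powr s))"

definition Lp_norm :: "'a measure \<Rightarrow> real \<Rightarrow> ('a \<Rightarrow> ennreal) \<Rightarrow> ennreal" where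
  "Lp_norm M p f = enn_powr (\<integral>\<^sup>+ x. enn_powr (f x) p \<partial>M) (1 / p)"

definition frac_max :: "(real^'n) set \<Rightarrow> (real^'n \<Rightarrow> real) \<Rightarrow> ((real^'n) set \<Rightarrow> real^'n \<Rightarrow> real)
    \<Rightarrow> real \<Rightarrow> real^'n \<Rightarrow> ennreal" where
  "frac_max R \<kappa> h \<gamma> x = (SUP Q\<in>{Q. is_cube Q \<and> x \<in> Q}.
      ennreal (1 / (measure (dunkl_measure R \<kappa>) Q powr (1 + \<gamma> / hom_dim R \<kappa>)))
      * (\<integral>\<^sup>+ y\<in>Q. ennreal \<bar>h Q y\<bar> \<partial>(dunkl_measure R \<kappa>)))"

end

theory Submission
  imports Defs
begin

lemma nn_integral_cmult_ge:
  "c * integral\<^sup>N M f \<le> (\<integral>\<^sup>+x. c * f x \<partial>M)"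
  unfolding nn_integral_def SUP_mult_left_ennreal
proof (rule SUP_least)
  fix g assume g: "g \<in> {g. simple_function M g \<and> g \<le> f}"
  then have "simple_function M (\<lambda>x. c * g x)" by auto
  moreover have "(\<lambda>x. c * g x) \<le> (\<lambda>x. c * f x)"
    using g by (auto simp: le_fun_def intro: mult_left_mono)
  ultimately have "integral\<^sup>S M (\<lambda>x. c * g x) \<le> (SUP g\<in>{g. simple_function M g \<and> g \<le> (\<lambda>x. c * f x)}. integral\<^sup>S M g)"
    by (intro SUP_upper) auto
  then show "c * integral\<^sup>S M g \<le> (SUP g\<in>{g. simple_function M g \<and> g \<le> (\<lambda>x. c * f x)}. integral\<^sup>S M g)"
    using g by simp
qed

lemma nn_integral_cmult_le:
  assumes "c > 0"
  shows "(\<integral>\<^sup>+x. ennreal c * f x \<partial>M) \<le> ennreal c * integral\<^sup>N M f"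
proof -
  have "ennreal (1/c) * (\<integral>\<^sup>+x. ennreal c * f x \<partial>M) \<le> (\<integral>\<^sup>+x. ennreal (1/c) * (ennreal c * f x) \<partial>M)"
    by (rule nn_integral_cmult_ge)
  also have "\<dots> = integral\<^sup>N M f"
    using assms by (simp add: mult.assoc[symmetric] ennreal_mult[symmetric])
  finally have "ennreal c * (ennreal (1/c) * (\<integral>\<^sup>+x. ennreal c * f x \<partial>M)) \<le> ennreal c * integral\<^sup>N M f"
    by (rule mult_left_mono) simp
  then show ?thesis
    using assms by (simp add: mult.assoc[symmetric] ennreal_mult[symmetric])
qed

lemma enn_powr_mono:
  assumes "x \<le> y" "s \<ge> 0"
  shows "enn_powr x s \<le> enn_powr y s"
proof (cases "y = \<infinity>")
  case True then show ?thesis by (simp add: enn_powr_def)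
next
  case False
  then have "x \<noteq> \<infinity>" using assms(1) top_unique by auto
  then show ?thesis using False assms
    by (auto simp: enn_powr_def top.not_eq_extremum intro!: powr_mono2 enn2real_mono)
qed

lemma enn_powr_ennreal: "r \<ge> 0 \<Longrightarrow> enn_powr (ennreal r) s = ennreal (r powr s)"
  by (simp add: enn_powr_def)

lemma key_real:
  fixes m \<tau> p q \<beta> :: real
  assumes m: "0 < m" and t: "0 \<le> \<tau>" and pq: "1 < p" "p < q" and b: "m * \<tau> powr p \<le> \<beta>"
  shows "m powr (1/p - 1/q) * \<tau> \<le> (\<beta> powr (1/p)) powr (1 - p/q) * \<tau> powr (p/q)"
proof (cases "\<tau> = 0")
  case True then show ?thesis by simp
next
  case False
  then have tp: "\<tau> > 0" using t by simp
  have "(m * \<tau> powr p) powr (1/p) \<le> \<beta> powr (1/p)"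
    using b m tp pq by (intro powr_mono2) auto
  moreover have "(m * \<tau> powr p) powr (1/p) = m powr (1/p) * \<tau>"
    using m tp pq by (simp add: powr_mult powr_powr)
  ultimately have A: "m powr (1/p) * \<tau> \<le> \<beta> powr (1/p)" by simp
  have r: "0 \<le> 1 - p/q" using pq by simp
  have "(m powr (1/p) * \<tau>) powr (1 - p/q) \<le> (\<beta> powr (1/p)) powr (1 - p/q)"
    using A r m tp by (intro powr_mono2) auto
  moreover have "(m powr (1/p) * \<tau>) powr (1 - p/q) = m powr (1/p - 1/q) * \<tau> powr (1 - p/q)"
  proof -
    have "(m powr (1/p) * \<tau>) powr (1 - p/q) = m powr (1/p * (1 - p/q)) * \<tau> powr (1 - p/q)"
      using m tp by (simp add: powr_mult powr_powr)
    moreover have "1/p * (1 - p/q) = 1/p - 1/q" using pq by (simp add: field_simps)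
    ultimately show ?thesis by simp
  qed
  ultimately have B: "m powr (1/p - 1/q) * \<tau> powr (1 - p/q) \<le> (\<beta> powr (1/p)) powr (1 - p/q)" by simp
  have "m powr (1/p - 1/q) * \<tau> = (m powr (1/p - 1/q) * \<tau> powr (1 - p/q)) * \<tau> powr (p/q)"
    using tp by (simp add: mult.assoc powr_add[symmetric])
  also have "\<dots> \<le> (\<beta> powr (1/p)) powr (1 - p/q) * \<tau> powr (p/q)"
    using B by (intro mult_right_mono) auto
  finally show ?thesis .
qed

lemma cube_open: "is_cube (Q::(real^'n) set) \<Longrightarrow> open Q"
proof -
  assume "is_cube Q"
  then obtain c r where Q: "Q = {x. \<forall>i. \<bar>x $ i - c $ i\<bar> < r}"
    unfolding is_cube_def by auto
  have "Q = (\<Inter>i\<in>UNIV. {x. \<bar>x $ i - c $ i\<bar> < r})" using Q by auto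
  also have "open \<dots>" by (intro open_INT finite ballI open_Collect_less continuous_intros)
  finally show ?thesis .
qed

theorem lemma4p7:
  fixes R :: "(real^'n) set" and \<kappa> :: "real^'n \<Rightarrow> real"
    and a b p q :: real
  assumes "root_system R" and "multiplicity R \<kappa>"
    and "0 \<le> b" and "b < a"
    and "1 < p" and "p < q"
    and "1 / p - 1 / q = (a - b) / hom_dim R \<kappa>"
  shows "\<exists>C::real. C > 0 \<and>
     (\<forall>h :: (real^'n) set \<Rightarrow> real^'n \<Rightarrow> real.
        (\<forall>Q. is_cube Q \<longrightarrow> h Q \<in> borel_measurable lborel) \<longrightarrow>
        Lp_norm (dunkl_measure R \<kappa>) q (frac_max R \<kappa> h b)
          \<le> ennreal C * Lp_norm (dunkl_measure R \<kappa>) p (frac_max R \<kappa> h a))"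
proof -
  define M where "M = dunkl_measure R \<kappa>"
  define N where "N = hom_dim R \<kappa>"
  have Npos: "N > 0"
  proof -
    have "(\<Sum>x\<in>R. \<kappa> x) \<ge> 0" using assms(2) unfolding multiplicity_def by (intro sum_nonneg) auto
    then show ?thesis unfolding N_def hom_dim_def by (simp add: add_pos_nonneg)
  qed
  define s where "s = 1/p - 1/q"
  define r where "r = p/q"
  have sN: "(a - b) / N = s" using assms(7) unfolding s_def N_def by simp
  have pq: "1 < p" "p < q" using assms by auto
  show ?thesis
  proof (intro exI[of _ 1] conjI allI impI)
    fix h :: "(real^'n) set \<Rightarrow> real^'n \<Rightarrow> real"
    define H where "H = frac_max R \<kappa> h a"
    define G where "G = frac_max R \<kappa> h b"
    define I where "I = (\<lambda>Q. \<integral>\<^sup>+ y\<in>Q. ennreal \<bar>h Q y\<bar> \<partial>M)"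
    define T where "T = (\<lambda>\<gamma> Q. ennreal (1 / (measure M Q powr (1 + \<gamma> / N))) * I Q)"
    have H_eq: "H x = (SUP Q\<in>{Q. is_cube Q \<and> x \<in> Q}. T a Q)" for x
      unfolding H_def frac_max_def T_def I_def M_def N_def by simp
    have G_eq: "G x = (SUP Q\<in>{Q. is_cube Q \<and> x \<in> Q}. T b Q)" for x
      unfolding G_def frac_max_def T_def I_def M_def N_def by simp
    define B where "B = (\<integral>\<^sup>+x. enn_powr (H x) p \<partial>M)"
    have LH: "Lp_norm (dunkl_measure R \<kappa>) p (frac_max R \<kappa> h a) = enn_powr B (1/p)"
      unfolding Lp_norm_def B_def H_def M_def by simp
    have LG: "Lp_norm (dunkl_measure R \<kappa>) q (frac_max R \<kappa> h b) = enn_powr (\<integral>\<^sup>+x. enn_powr (G x) q \<partial>M) (1/q)"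
      unfolding Lp_norm_def G_def M_def by simp
    show "Lp_norm (dunkl_measure R \<kappa>) q (frac_max R \<kappa> h b)
          \<le> ennreal 1 * Lp_norm (dunkl_measure R \<kappa>) p (frac_max R \<kappa> h a)"
    proof (cases "B = \<infinity>")
      case True
      then show ?thesis unfolding LH by (simp add: enn_powr_def)
    next
      case False
      then obtain \<beta> where \<beta>: "\<beta> \<ge> 0" "B = ennreal \<beta>"
        by (cases B) auto
      define Bn where "Bn = \<beta> powr (1/p)"
      define c where "c = Bn powr (1 - r)"
      have c0: "c \<ge> 0" unfolding c_def by simp
      have termbound: "T b Q \<le> ennreal c * enn_powr (H x) r" if Q: "is_cube Q" "x \<in> Q" for x Q
      proof -
        define m where "m = measure M Q"
        show ?thesis
        proof (cases "m = 0")
          case True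
          then show ?thesis unfolding T_def m_def by simp
        next
          case False
          then have mpos: "m > 0" unfolding m_def using measure_nonneg[of M Q] by linarith
          have Qs: "Q \<in> sets M" unfolding M_def dunkl_measure_def
            using cube_open[OF Q(1)] by simp
          have fin: "emeasure M Q \<noteq> \<infinity>"
            using False unfolding m_def measure_def by auto
          have emQ: "emeasure M Q = ennreal m"
            unfolding m_def using fin by (simp add: emeasure_eq_ennreal_measure)
          define t where "t = T a Q"
          have tle: "t \<le> H y" if "y \<in> Q" for y
            unfolding H_eq t_def using Q(1) that by (intro SUP_upper) auto
          have "enn_powr t p * emeasure M Q = (\<integral>\<^sup>+y. enn_powr t p * indicator Q y \<partial>M)"
            using Qs by (simp add: nn_integral_cmult_indicator)
          also have "\<dots> \<le> B"
            unfolding B_def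
          proof (rule nn_integral_mono)
            fix y show "enn_powr t p * indicator Q y \<le> enn_powr (H y) p"
              using tle[of y] pq by (cases "y \<in> Q") (auto intro: enn_powr_mono)
          qed
          finally have tB: "enn_powr t p * ennreal m \<le> ennreal \<beta>" using emQ \<beta> by simp
          have tfin: "t \<noteq> \<infinity>"
          proof
            assume "t = \<infinity>"
            then have "enn_powr t p * ennreal m = \<infinity>"
              using mpos by (simp add: enn_powr_def ennreal_mult_top)
            then show False using tB by (simp add: top_unique)
          qed
          then obtain \<tau> where \<tau>: "\<tau> \<ge> 0" "t = ennreal \<tau>" by (cases t) auto
          have "ennreal (\<tau> powr p * m) \<le> ennreal \<beta>"
            using tB \<tau> mpos by (simp add: enn_powr_ennreal ennreal_mult)
          then have tb: "m * \<tau> powr p \<le> \<beta>" using \<beta> by (simp add: mult.commute)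
          have key: "m powr s * \<tau> \<le> c * \<tau> powr r"
            using key_real[OF mpos \<tau>(1) pq tb] unfolding s_def c_def Bn_def r_def .
          have rel: "1 / (m powr (1 + b / N)) = m powr s * (1 / (m powr (1 + a / N)))"
          proof -
            have "1 + a / N = s + (1 + b / N)" using sN Npos by (simp add: field_simps)
            then show ?thesis using mpos by (simp add: powr_add)
          qed
          have "T b Q = ennreal (m powr s) * t"
            unfolding T_def t_def m_def[symmetric] rel mult.assoc[symmetric]
            by (subst ennreal_mult) auto
          also have "\<dots> = ennreal (m powr s * \<tau>)" using \<tau> by (simp add: ennreal_mult)
          also have "\<dots> \<le> ennreal (c * \<tau> powr r)" using key by (rule ennreal_leI)
          also have "\<dots> = ennreal c * enn_powr t r" using \<tau> c0 by (simp add: ennreal_mult enn_powr_ennreal)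
          also have "\<dots> \<le> ennreal c * enn_powr (H x) r"
            using tle[OF Q(2)] pq unfolding r_def by (intro mult_left_mono enn_powr_mono) auto
          finally show ?thesis .
        qed
      qed
      have pw: "enn_powr (G x) q \<le> ennreal (c powr q) * enn_powr (H x) p" for x
      proof -
        have "G x \<le> ennreal c * enn_powr (H x) r"
          unfolding G_eq using termbound by (intro SUP_least) auto
        then have "enn_powr (G x) q \<le> enn_powr (ennreal c * enn_powr (H x) r) q"
          using pq by (intro enn_powr_mono) auto
        also have "\<dots> \<le> ennreal (c powr q) * enn_powr (H x) p"
        proof (cases "H x = \<infinity>")
          case True
          show ?thesis
          proof (cases "c = 0")
            case True
            then show ?thesis by (simp add: enn_powr_def)
          next
            case False
            then have "c powr q > 0" using c0 by simp
            then show ?thesis using \<open>H x = \<infinity>\<close> by (simp add: enn_powr_def ennreal_mult_top)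
          qed
        next
          case False
          then obtain hx where hx: "hx \<ge> 0" "H x = ennreal hx" by (cases "H x") auto
          have "(c * hx powr r) powr q = c powr q * hx powr p"
            using c0 hx pq unfolding r_def by (simp add: powr_mult powr_powr)
          then show ?thesis using hx c0
            by (simp add: enn_powr_ennreal ennreal_mult[symmetric])
        qed
        finally show ?thesis .
      qed
      have "(\<integral>\<^sup>+x. enn_powr (G x) q \<partial>M) \<le> (\<integral>\<^sup>+x. ennreal (c powr q) * enn_powr (H x) p \<partial>M)"
        by (intro nn_integral_mono pw)
      also have "\<dots> \<le> ennreal (c powr q) * B"
      proof (cases "c = 0")
        case True then show ?thesis by simp
      next
        case False
        then show ?thesis unfolding B_def using c0 by (intro nn_integral_cmult_le) simp
      qed
      also have "\<dots> = ennreal (Bn powr q)"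
      proof -
        have "c powr q * \<beta> = Bn powr q"
        proof (cases "\<beta> = 0")
          case True then show ?thesis unfolding c_def Bn_def by simp
        next
          case False
          then have bp: "\<beta> > 0" using \<beta> by simp
          have "c powr q = \<beta> powr (1/p * (1 - r) * q)" unfolding c_def Bn_def by (simp add: powr_powr)
          moreover have "1/p * (1 - r) * q = 1/p * q - 1" using pq unfolding r_def by (simp add: field_simps)
          moreover have "Bn powr q = \<beta> powr (1/p * q)" unfolding Bn_def by (simp add: powr_powr)
          ultimately show ?thesis using bp by (simp add: powr_diff)
        qed
        then show ?thesis using \<beta> c0 by (simp add: ennreal_mult[symmetric])
      qed
      finally have "enn_powr (\<integral>\<^sup>+x. enn_powr (G x) q \<partial>M) (1/q) \<le> enn_powr (ennreal (Bn powr q)) (1/q)"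
        using pq by (intro enn_powr_mono) auto
      also have "\<dots> = ennreal Bn"
        using pq unfolding Bn_def by (simp add: enn_powr_ennreal powr_powr)
      also have "\<dots> = enn_powr B (1/p)" using \<beta> unfolding Bn_def by (simp add: enn_powr_ennreal)
      finally show ?thesis unfolding LG LH by simp
    qed
  qed simp
qed

end
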